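(* Let $[\gamma]\in J$ with $2\le l(M_\gamma)<p$ and $e([\gamma])=0$. Then there exists $[\gamma']\in J$ such that: (1) $l(M_{\gamma'})=l(M_\gamma)+1$; (2) $[\gamma']^{\rho^2}=[\gamma]^{\rho}$; (3) the $G$-fixed submodules coincide: $M_\gamma^G=M_{\gamma'}^G$; (4) if $l(M_\gamma)<p-1$, then $[\gamma']\in J_{p-1}$ and $e([\gamma'])=0$.
   Context: $p$ odd prime; $F$ a field containing a primitive $p$th root of unity $\xi_p$; $K=F(\sqrt[p]{a})$, $a\in F^\times$, cyclic of degree $p$; $G=\mathrm{Gal}(K/F)=\langle\sigma\rangle$ with $\sigma(\sqrt[p]{a})=\xi_p\sqrt[p]{a}$; $\rho=\sigma-1$. $J=K^\times/K^{\times p}$ as a multiplicative $\mathbb{F}_p[G]$-module with exponential action, $[\gamma]$ the class of $\gamma$; $J_i=\ker(\rho^i)$. $M_\gamma$ is the $\mathbb{F}_p[G]$-submodule generated by $[\gamma]$; its length $l(M_\gamma)$ is its $\mathbb{F}_p$-dimension, equivalently the least $i$ with $[\gamma]^{\rho^i}$ trivial. For $[\gamma]\in J_{p-1}$, the index $e([\gamma])\in\mathbb{F}_p$ is defined by $\xi_p^{e([\gamma])}=\sigma(\delta)/\delta$ where $\delta\in K$ is any $p$th root of $N_{K/F}(\gamma)$. *)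

theory Defs
  imports "HOL-Computational_Algebra.Primes"
begin

text \<open>The field K is the whole type 'k; F is a subfield of it.\<close>

definition is_subfield :: "'k::field set \<Rightarrow> bool" where
  "is_subfield S \<longleftrightarrow> 0 \<in> S \<and> 1 \<in> S \<and> (\<forall>x\<in>S. \<forall>y\<in>S. x + y \<in> S \<and> x * y \<in> S)
     \<and> (\<forall>x\<in>S. - x \<in> S \<and> inverse x \<in> S)"

definition generated_by :: "'k::field set \<Rightarrow> 'k \<Rightarrow> bool" where
  "generated_by F \<alpha> \<longleftrightarrow> (\<forall>S. is_subfield S \<and> F \<subseteq> S \<and> \<alpha> \<in> S \<longrightarrow> S = UNIV)"

definition field_aut :: "('k::field \<Rightarrow> 'k) \<Rightarrow> bool" where
  "field_aut \<sigma> \<longleftrightarrow> bij \<sigma> \<and> (\<forall>x y. \<sigma> (x + y) = \<sigma> x + \<sigma> y \<and> \<sigma> (x * y) = \<sigma> x * \<sigma> y) \<and> \<sigma> 1 = 1"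

definition kummer_setup :: "nat \<Rightarrow> 'k::field set \<Rightarrow> 'k \<Rightarrow> 'k \<Rightarrow> ('k \<Rightarrow> 'k) \<Rightarrow> bool" where
  "kummer_setup p F \<xi> \<alpha> \<sigma> \<longleftrightarrow> prime p \<and> odd p \<and> is_subfield F \<and>
     \<xi> \<in> F \<and> \<xi> ^ p = 1 \<and> \<xi> \<noteq> 1 \<and>
     \<alpha> \<noteq> 0 \<and> \<alpha> ^ p \<in> F \<and> generated_by F \<alpha> \<and>
     field_aut \<sigma> \<and> (\<forall>x\<in>F. \<sigma> x = x) \<and> \<sigma> \<alpha> = \<xi> * \<alpha>"

text \<open>Elements of J = K^x / K^{x p} are represented by nonzero gamma; a class is trivial
  iff its representative is a p-th power.\<close>
definition pth_power :: "nat \<Rightarrow> 'k::field \<Rightarrow> bool" where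
  "pth_power p x \<longleftrightarrow> (\<exists>\<beta>. \<beta> \<noteq> 0 \<and> x = \<beta> ^ p)"

definition cls :: "nat \<Rightarrow> 'k::field \<Rightarrow> 'k set" where
  "cls p \<gamma> = {\<gamma> * \<beta> ^ p | \<beta>. \<beta> \<noteq> 0}"

text \<open>Exponential action of rho = sigma - 1.\<close>
definition rho :: "('k::field \<Rightarrow> 'k) \<Rightarrow> 'k \<Rightarrow> 'k" where
  "rho \<sigma> x = \<sigma> x / x"

definition rho_pow :: "('k::field \<Rightarrow> 'k) \<Rightarrow> nat \<Rightarrow> 'k \<Rightarrow> 'k" where
  "rho_pow \<sigma> i x = (rho \<sigma> ^^ i) x"

text \<open>Length l(M_gamma): least i with [gamma]^(rho^i) trivial.\<close>
definition len :: "nat \<Rightarrow> ('k::field \<Rightarrow> 'k) \<Rightarrow> 'k \<Rightarrow> nat" where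
  "len p \<sigma> \<gamma> = (LEAST i. pth_power p (rho_pow \<sigma> i \<gamma>))"

text \<open>Membership of [gamma] in J_i = ker(rho^i).\<close>
definition inJ :: "nat \<Rightarrow> ('k::field \<Rightarrow> 'k) \<Rightarrow> nat \<Rightarrow> 'k \<Rightarrow> bool" where
  "inJ p \<sigma> i \<gamma> \<longleftrightarrow> pth_power p (rho_pow \<sigma> i \<gamma>)"

definition normK :: "nat \<Rightarrow> ('k::field \<Rightarrow> 'k) \<Rightarrow> 'k \<Rightarrow> 'k" where
  "normK p \<sigma> \<gamma> = (\<Prod>i<p. (\<sigma> ^^ i) \<gamma>)"

text \<open>Index e([gamma]) in F_p, represented by a natural number below p.\<close>
definition idx :: "nat \<Rightarrow> ('k::field \<Rightarrow> 'k) \<Rightarrow> 'k \<Rightarrow> 'k \<Rightarrow> nat" where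
  "idx p \<sigma> \<xi> \<gamma> = (SOME e. e < p \<and> (\<exists>\<delta>. \<delta> ^ p = normK p \<sigma> \<gamma> \<and> \<sigma> \<delta> = \<xi> ^ e * \<delta>))"

text \<open>The F_p[G]-submodule M_gamma generated by [gamma], as a set of classes.\<close>
definition Mgen :: "nat \<Rightarrow> ('k::field \<Rightarrow> 'k) \<Rightarrow> 'k \<Rightarrow> 'k set set" where
  "Mgen p \<sigma> \<gamma> = {cls p (\<Prod>i<p. ((\<sigma> ^^ i) \<gamma>) ^ c i) | c. True}"

definition Mfix :: "nat \<Rightarrow> ('k::field \<Rightarrow> 'k) \<Rightarrow> 'k \<Rightarrow> 'k set set" where
  "Mfix p \<sigma> \<gamma> = {X \<in> Mgen p \<sigma> \<gamma>. \<forall>x\<in>X. pth_power p (rho \<sigma> x)}"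

end

theory Submission
  imports Defs "HOL-Computational_Algebra.Polynomial"
begin

definition fhom :: "('k::field \<Rightarrow> 'k) \<Rightarrow> bool" where
  "fhom f \<longleftrightarrow> (\<forall>x y. f (x + y) = f x + f y \<and> f (x * y) = f x * f y) \<and> f 1 = 1"

lemma fhom_add: "fhom f \<Longrightarrow> f (x + y) = f x + f y" by (simp add: fhom_def)
lemma fhom_mult: "fhom f \<Longrightarrow> f (x * y) = f x * f y" by (simp add: fhom_def)
lemma fhom_one: "fhom f \<Longrightarrow> f 1 = 1" by (simp add: fhom_def)
lemma fhom_zero: "fhom f \<Longrightarrow> f 0 = 0"
proof -
  assume h: "fhom f"
  have "f 0 + f 0 = f 0 + 0" using fhom_add[OF h, of 0 0] by simp
  then show ?thesis by (simp only: add_left_cancel)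
qed
lemma fhom_minus: "fhom f \<Longrightarrow> f (- x) = - f x"
proof -
  assume h: "fhom f"
  have "f (x + - x) = f x + f (- x)" using fhom_add[OF h] .
  then show ?thesis using fhom_zero[OF h] by (simp add: eq_neg_iff_add_eq_0 add.commute)
qed
lemma fhom_inverse: "fhom f \<Longrightarrow> f (inverse x) = inverse (f x)"
proof (cases "x = 0")
  case True
  assume h: "fhom f" then show ?thesis using True fhom_zero[OF h] by simp
next
  case False
  assume h: "fhom f"
  have "f (x * inverse x) = f x * f (inverse x)" using fhom_mult[OF h] .
  then have "f x * f (inverse x) = 1" using False fhom_one[OF h] by simp
  then show ?thesis by (metis inverse_unique)
qed
lemma fhom_nz: "fhom f \<Longrightarrow> f x = 0 \<longleftrightarrow> x = 0"
proof
  assume h: "fhom f" and "f x = 0"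
  then have "f (x * inverse x) = 0" using fhom_mult[OF h] by simp
  then show "x = 0" using fhom_one[OF h] by (cases "x = 0") auto
next
  assume "fhom f" "x = 0" then show "f x = 0" using fhom_zero by blast
qed
lemma fhom_divide: "fhom f \<Longrightarrow> f (x / y) = f x / f y"
  by (simp add: divide_inverse fhom_mult fhom_inverse)
lemma fhom_power: "fhom f \<Longrightarrow> f (x ^ n) = f x ^ n"
  by (induction n) (simp_all add: fhom_one fhom_mult)
lemma fhom_prod: "fhom f \<Longrightarrow> f (prod g A) = (\<Prod>i\<in>A. f (g i))"
  by (induction A rule: infinite_finite_induct) (simp_all add: fhom_one fhom_mult)
lemma fhom_sum: "fhom f \<Longrightarrow> f (sum g A) = (\<Sum>i\<in>A. f (g i))"
  by (induction A rule: infinite_finite_induct) (simp_all add: fhom_zero fhom_add)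
lemma fhom_comp: "fhom f \<Longrightarrow> fhom g \<Longrightarrow> fhom (f \<circ> g)"
  by (simp add: fhom_def)
lemma fhom_id: "fhom id" by (simp add: fhom_def)
lemma fhom_funpow: "fhom f \<Longrightarrow> fhom (f ^^ n)"
  by (induction n) (simp_all add: fhom_id fhom_comp)

locale ks =
  fixes p :: nat and F :: "'k::field set" and \<xi> \<alpha> :: 'k and \<sigma> :: "'k \<Rightarrow> 'k"
  assumes ks: "kummer_setup p F \<xi> \<alpha> \<sigma>"
begin

lemma prime_p: "prime p" using ks by (simp add: kummer_setup_def)
lemma odd_p: "odd p" using ks by (simp add: kummer_setup_def)
lemma p_ge3: "p \<ge> 3"
proof -
  have "p \<ge> 2" using prime_p prime_ge_2_nat by blast
  moreover have "p \<noteq> 2" using odd_p by auto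
  ultimately show ?thesis by linarith
qed
lemma xi_p: "\<xi> ^ p = 1" using ks by (simp add: kummer_setup_def)
lemma xi_ne1: "\<xi> \<noteq> 1" using ks by (simp add: kummer_setup_def)
lemma xi_nz: "\<xi> \<noteq> 0" using xi_p p_ge3 by (cases "\<xi> = 0") (auto simp: power_0_left)
lemma alpha_nz: "\<alpha> \<noteq> 0" using ks by (simp add: kummer_setup_def)
lemma sigma_alpha: "\<sigma> \<alpha> = \<xi> * \<alpha>" using ks by (simp add: kummer_setup_def)
lemma sigma_F: "x \<in> F \<Longrightarrow> \<sigma> x = x" using ks by (simp add: kummer_setup_def)
lemma sigma_xi: "\<sigma> \<xi> = \<xi>" using ks by (simp add: kummer_setup_def)
lemma hom: "fhom \<sigma>" using ks by (simp add: kummer_setup_def field_aut_def fhom_def)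
lemma homi: "fhom (\<sigma> ^^ i)" using fhom_funpow[OF hom] .

lemma sigmai_F: "x \<in> F \<Longrightarrow> (\<sigma> ^^ i) x = x"
  by (induction i) (simp_all add: sigma_F)
lemma sigmai_alpha: "(\<sigma> ^^ i) \<alpha> = \<xi> ^ i * \<alpha>"
proof (induction i)
  case 0 then show ?case by simp
next
  case (Suc i)
  have xF: "\<xi> \<in> F" using ks by (simp add: kummer_setup_def)
  have "(\<sigma> ^^ Suc i) \<alpha> = \<sigma> (\<xi> ^ i * \<alpha>)" using Suc by simp
  also have "\<dots> = \<xi> ^ Suc i * \<alpha>" using fhom_mult[OF hom] fhom_power[OF hom] sigma_xi sigma_alpha
    by simp
  finally show ?case .
qed

lemma sigma_p: "(\<sigma> ^^ p) x = x"
proof -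
  let ?S = "{x. (\<sigma> ^^ p) x = x}"
  have sub: "is_subfield ?S"
    unfolding is_subfield_def using fhom_zero[OF homi] fhom_one[OF homi] fhom_add[OF homi]
      fhom_mult[OF homi] fhom_minus[OF homi] fhom_inverse[OF homi] by simp
  have "F \<subseteq> ?S" using sigmai_F by blast
  moreover have "\<alpha> \<in> ?S" using sigmai_alpha xi_p by simp
  moreover have "generated_by F \<alpha>" using ks by (simp add: kummer_setup_def)
  ultimately have "?S = UNIV" using sub unfolding generated_by_def by blast
  then show ?thesis by blast
qed

lemma xi_pow_eq1: assumes "\<xi> ^ d = 1" shows "p dvd d"
proof (rule ccontr)
  assume nd: "\<not> p dvd d"
  define r where "r = d mod p"
  have r0: "r \<noteq> 0" using nd unfolding r_def using mod_eq_0_iff_dvd by blast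
  have rp: "r < p" using p_ge3 unfolding r_def by simp
  have dd: "d = p * (d div p) + r" unfolding r_def by simp
  have "\<xi> ^ d = (\<xi> ^ p) ^ (d div p) * \<xi> ^ r"
    by (subst dd) (simp only: power_add power_mult)
  then have xr: "\<xi> ^ r = 1" using assms xi_p by simp
  have "\<not> p dvd r" using r0 rp by (auto dest: dvd_imp_le)
  then have cop: "coprime r p" using prime_imp_coprime[OF prime_p] coprime_commute by blast
  then have g: "gcd r p = 1" by simp
  obtain x y where xy: "r * x = p * y + gcd r p" using bezout_nat[OF r0] by blast
  have "\<xi> ^ (r * x) = 1" by (simp add: power_mult xr)
  moreover have "\<xi> ^ (r * x) = (\<xi> ^ p) ^ y * \<xi>" unfolding xy g by (simp only: power_add power_mult power_one_right)
  ultimately show False using xi_ne1 xi_p by simp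
qed

lemma xi_inj: assumes "i < p" "j < p" "\<xi> ^ i = \<xi> ^ j" shows "i = j"
proof (rule ccontr)
  assume ne: "i \<noteq> j"
  have *: "\<xi> ^ (b - a) = 1" if "a < b" "b < p" "\<xi> ^ a = \<xi> ^ b" for a b
  proof -
    have "\<xi> ^ a * \<xi> ^ (b - a) = \<xi> ^ b" using that(1) by (simp add: power_add[symmetric])
    then have "\<xi> ^ a * \<xi> ^ (b - a) = \<xi> ^ a * 1" using that(3) by simp
    then show ?thesis using xi_nz by simp
  qed
  show False
  proof (cases "i < j")
    case True
    then have "p dvd (j - i)" using *[OF True assms(2) assms(3)] xi_pow_eq1 by blast
    then show False using True assms by (simp add: nat_dvd_not_less)
  next
    case False
    then have "j < i" using ne by simp
    then have "p dvd (i - j)" using *[OF \<open>j < i\<close> assms(1) assms(3)[symmetric]] xi_pow_eq1 by blast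
    then show False using \<open>j < i\<close> assms by (simp add: nat_dvd_not_less)
  qed
qed

lemma root_unity: assumes "\<zeta> ^ p = 1" shows "\<exists>k<p. \<zeta> = \<xi> ^ k"
proof (rule ccontr)
  assume nz: "\<not> (\<exists>k<p. \<zeta> = \<xi> ^ k)"
  define P :: "'k poly" where "P = monom 1 p + [:-1:]"
  have degP: "degree P = p" using p_ge3 by (simp add: P_def degree_add_eq_left degree_monom_eq)
  have P0: "P \<noteq> 0" using degP p_ge3 by auto
  have sub: "insert \<zeta> ((\<lambda>k. \<xi> ^ k) ` {..<p}) \<subseteq> {x. poly P x = 0}"
  proof -
    have "poly P (\<xi> ^ k) = 0" for k
    proof -
      have "(\<xi> ^ k) ^ p = (\<xi> ^ p) ^ k" by (simp add: power_mult[symmetric] mult.commute)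
      then show ?thesis using xi_p by (simp add: P_def poly_monom)
    qed
    moreover have "poly P \<zeta> = 0" using assms by (simp add: P_def poly_monom)
    ultimately show ?thesis by auto
  qed
  have inj: "inj_on (\<lambda>k. \<xi> ^ k) {..<p}" using xi_inj by (auto simp: inj_on_def)
  have "card (insert \<zeta> ((\<lambda>k. \<xi> ^ k) ` {..<p})) = Suc p"
  proof -
    have "\<zeta> \<notin> (\<lambda>k. \<xi> ^ k) ` {..<p}" using nz by auto
    then have "card (insert \<zeta> ((\<lambda>k. \<xi> ^ k) ` {..<p})) = Suc (card ((\<lambda>k. \<xi> ^ k) ` {..<p}))"
      by simp
    also have "card ((\<lambda>k. \<xi> ^ k) ` {..<p}) = p" using card_image[OF inj] by simp
    finally show ?thesis .
  qed
  moreover have "card (insert \<zeta> ((\<lambda>k. \<xi> ^ k) ` {..<p})) \<le> card {x. poly P x = 0}"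
    using sub poly_roots_finite[OF P0] by (rule card_mono[rotated])
  moreover have "card {x. poly P x = 0} \<le> p" using card_poly_roots_bound[OF P0] degP by simp
  ultimately show False by simp
qed

lemma p_pos: "p > 0" using p_ge3 by simp

abbreviation pth where "pth x \<equiv> pth_power p x"
abbreviation r where "r \<equiv> rho \<sigma>"
abbreviation rp where "rp n x \<equiv> rho_pow \<sigma> n x"

lemma pth_nz: "pth x \<Longrightarrow> x \<noteq> 0" unfolding pth_power_def by auto
lemma pth_pp: "b \<noteq> 0 \<Longrightarrow> pth (b ^ p)" unfolding pth_power_def by auto
lemma pth_one: "pth 1" using pth_pp[of 1] by simp
lemma pth_mult: "pth x \<Longrightarrow> pth y \<Longrightarrow> pth (x * y)"
  unfolding pth_power_def by (metis mult_eq_0_iff power_mult_distrib)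
lemma pth_inverse: "pth x \<Longrightarrow> pth (inverse x)"
  unfolding pth_power_def by (metis inverse_nonzero_iff_nonzero power_inverse)
lemma pth_divide: "pth x \<Longrightarrow> pth y \<Longrightarrow> pth (x / y)"
  by (simp add: divide_inverse pth_mult pth_inverse)
lemma pth_power: "pth x \<Longrightarrow> pth (x ^ n)"
  by (induction n) (simp_all add: pth_one pth_mult)
lemma pth_prod: "(\<And>i. i \<in> A \<Longrightarrow> pth (f i)) \<Longrightarrow> pth (prod f A)"
  by (induction A rule: infinite_finite_induct) (simp_all add: pth_one pth_mult)
lemma pth_cancel: "pth (x * y) \<Longrightarrow> pth y \<Longrightarrow> pth x"
proof -
  assume a: "pth (x * y)" "pth y"
  have "y \<noteq> 0" using a(2) pth_nz by blast
  then have "x = (x * y) / y" by simp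
  then show ?thesis using pth_divide[OF a] by simp
qed
lemma pth_pmult: "x \<noteq> 0 \<Longrightarrow> p dvd n \<Longrightarrow> pth (x ^ n)"
  using pth_pp[of "x ^ (n div p)"] by (simp add: power_mult[symmetric] mult.commute)
lemma pth_coprime: assumes "x \<noteq> 0" "pth (x ^ a)" "\<not> p dvd a" shows "pth x"
proof -
  have a0: "a \<noteq> 0" using assms(3) by (metis dvd_0_right)
  have "coprime a p" using prime_imp_coprime[OF prime_p assms(3)] coprime_commute by blast
  then have g: "gcd a p = 1" by simp
  obtain u v where uv: "a * u = p * v + gcd a p" using bezout_nat[OF a0] by blast
  have e: "(x ^ a) ^ u = x ^ (p * v) * x" unfolding power_mult[symmetric] uv g by (simp add: power_add)
  have "pth ((x ^ a) ^ u)" using pth_power[OF assms(2)] .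
  then have "pth (x ^ (p * v) * x)" using e by simp
  then show ?thesis using pth_cancel[of x "x ^ (p*v)"] pth_pmult[OF assms(1)] by (simp add: mult.commute)
qed

lemma sig_nz: "\<sigma> x = 0 \<longleftrightarrow> x = 0" using fhom_nz[OF hom] .
lemma rho_mult: "r (x * y) = r x * r y"
  unfolding rho_def by (simp add: fhom_mult[OF hom])
lemma rho_inverse: "r (inverse x) = inverse (r x)"
  unfolding rho_def by (simp add: fhom_inverse[OF hom] divide_inverse mult.commute)
lemma rho_divide: "r (x / y) = r x / r y"
  by (simp add: divide_inverse rho_mult rho_inverse)
lemma rho_one: "r 1 = 1" unfolding rho_def by (simp add: fhom_one[OF hom])
lemma rho_power: "r (x ^ n) = r x ^ n"
  by (induction n) (simp_all add: rho_one rho_mult)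
lemma rho_prod: "r (prod f A) = (\<Prod>i\<in>A. r (f i))"
  by (induction A rule: infinite_finite_induct) (simp_all add: rho_one rho_mult)
lemma rho_nz: "x \<noteq> 0 \<Longrightarrow> r x \<noteq> 0" unfolding rho_def by (simp add: sig_nz)
lemma rho_fix: "\<sigma> d = d \<Longrightarrow> d \<noteq> 0 \<Longrightarrow> r d = 1" unfolding rho_def by simp
lemma rho_pth: "pth x \<Longrightarrow> pth (r x)"
  unfolding pth_power_def by (metis rho_power rho_nz)

lemma rp_0[simp]: "rp 0 x = x" by (simp add: rho_pow_def)
lemma rp_Suc: "rp (Suc n) x = r (rp n x)" by (simp add: rho_pow_def)
lemma rp_Suc': "rp (Suc n) x = rp n (r x)" by (simp add: rho_pow_def funpow_Suc_right del: funpow.simps)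
lemma rp_add: "rp (m + n) x = rp m (rp n x)" by (simp add: rho_pow_def funpow_add)
lemma rp_mult: "rp n (x * y) = rp n x * rp n y"
  by (induction n) (simp_all add: rp_Suc rho_mult)
lemma rp_one: "rp n 1 = 1"
  by (induction n) (simp_all add: rp_Suc rho_one)
lemma rp_inverse: "rp n (inverse x) = inverse (rp n x)"
  by (induction n) (simp_all add: rp_Suc rho_inverse)
lemma rp_divide: "rp n (x / y) = rp n x / rp n y"
  by (simp add: divide_inverse rp_mult rp_inverse)
lemma rp_power: "rp n (x ^ k) = rp n x ^ k"
  by (induction k) (simp_all add: rp_one rp_mult)
lemma rp_prod: "rp n (prod f A) = (\<Prod>i\<in>A. rp n (f i))"
  by (induction A rule: infinite_finite_induct) (simp_all add: rp_one rp_mult)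
lemma rp_nz: "x \<noteq> 0 \<Longrightarrow> rp n x \<noteq> 0"
  by (induction n) (simp_all add: rp_Suc rho_nz)
lemma rp_pth: "pth x \<Longrightarrow> pth (rp n x)"
  by (induction n) (simp_all add: rp_Suc rho_pth)
lemma rp_mono: "pth (rp i x) \<Longrightarrow> i \<le> j \<Longrightarrow> pth (rp j x)"
  using rp_pth[of "rp i x" "j - i"] by (simp add: rp_add[symmetric])
lemma rp_fix: "\<sigma> d = d \<Longrightarrow> d \<noteq> 0 \<Longrightarrow> n \<ge> 1 \<Longrightarrow> rp n d = 1"
proof -
  assume a: "\<sigma> d = d" "d \<noteq> 0" "n \<ge> 1"
  then obtain m where "n = Suc m" by (cases n) auto
  then show ?thesis using a by (simp add: rp_Suc' rho_fix rp_one)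
qed

lemma sig_eq: "\<sigma> y = y * r y"
  by (cases "y = 0") (simp_all add: rho_def fhom_zero[OF hom])

lemma sig_expand: "(\<sigma> ^^ i) x = (\<Prod>j<Suc i. rp j x ^ (i choose j))"
proof (induction i)
  case 0 then show ?case by simp
next
  case (Suc i)
  let ?g = "\<lambda>j. rp j x"
  have "(\<sigma> ^^ Suc i) x = \<sigma> (\<Prod>j<Suc i. ?g j ^ (i choose j))" using Suc by simp
  also have "\<dots> = (\<Prod>j<Suc i. (?g j * ?g (Suc j)) ^ (i choose j))"
  proof -
    have "\<sigma> (\<Prod>j<Suc i. ?g j ^ (i choose j)) = (\<Prod>j<Suc i. \<sigma> (?g j) ^ (i choose j))"
      by (simp only: fhom_prod[OF hom] fhom_power[OF hom])
    moreover have "\<sigma> (?g j) = ?g j * ?g (Suc j)" for j using sig_eq[of "?g j"] rp_Suc[of j x] by simp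
    ultimately show ?thesis by simp
  qed
  also have "\<dots> = (\<Prod>j<Suc i. ?g j ^ (i choose j)) * (\<Prod>j<Suc i. ?g (Suc j) ^ (i choose j))"
    by (simp add: power_mult_distrib prod.distrib)
  also have "(\<Prod>j<Suc i. ?g j ^ (i choose j)) = x * (\<Prod>j<Suc i. ?g (Suc j) ^ (i choose Suc j))"
  proof -
    have a: "(\<Prod>j<Suc i. ?g j ^ (i choose j)) = ?g 0 ^ (i choose 0) * (\<Prod>j<i. ?g (Suc j) ^ (i choose Suc j))"
      by (rule prod.lessThan_Suc_shift)
    have b: "(\<Prod>j<Suc i. ?g (Suc j) ^ (i choose Suc j)) = (\<Prod>j<i. ?g (Suc j) ^ (i choose Suc j)) * ?g (Suc i) ^ (i choose Suc i)"
      by (rule prod.lessThan_Suc)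
    have c: "?g (Suc i) ^ (i choose Suc i) = 1" by (simp add: binomial_eq_0)
    show ?thesis unfolding a b c by simp
  qed
  finally have L: "(\<sigma> ^^ Suc i) x = x * (\<Prod>j<Suc i. ?g (Suc j) ^ (i choose Suc j)) * (\<Prod>j<Suc i. ?g (Suc j) ^ (i choose j))" .
  have "(\<Prod>j<Suc (Suc i). ?g j ^ (Suc i choose j)) = ?g 0 ^ (Suc i choose 0) * (\<Prod>j<Suc i. ?g (Suc j) ^ (Suc i choose Suc j))"
    by (rule prod.lessThan_Suc_shift)
  also have "\<dots> = x * (\<Prod>j<Suc i. ?g (Suc j) ^ (i choose j) * ?g (Suc j) ^ (i choose Suc j))"
    by (simp only: binomial_Suc_Suc power_add binomial_n_0 power_one_right rp_0)
  also have "\<dots> = x * ((\<Prod>j<Suc i. ?g (Suc j) ^ (i choose j)) * (\<Prod>j<Suc i. ?g (Suc j) ^ (i choose Suc j)))"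
    by (simp only: prod.distrib)
  finally show ?case unfolding L by (simp only: mult.assoc mult.commute mult.left_commute)
qed

lemma sig_expand_ext: "i < N \<Longrightarrow> (\<sigma> ^^ i) x = (\<Prod>j<N. rp j x ^ (i choose j))"
proof -
  assume iN: "i < N"
  have "(\<Prod>j<Suc i. rp j x ^ (i choose j)) = (\<Prod>j<N. rp j x ^ (i choose j))"
    by (rule prod.mono_neutral_left) (use iN in \<open>auto simp: binomial_eq_0\<close>)
  then show ?thesis using sig_expand by simp
qed

abbreviation N where "N x \<equiv> normK p \<sigma> x"

definition H :: "'k \<Rightarrow> 'k" where
  "H x = (\<Prod>j<p-1. rp j x ^ ((p choose Suc j) div p))"

lemma norm_expand: "N x = (\<Prod>j<p. rp j x ^ (p choose Suc j))"
proof -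
  have "N x = (\<Prod>i<p. \<Prod>j<p. rp j x ^ (i choose j))"
    unfolding normK_def by (rule prod.cong) (simp_all add: sig_expand_ext)
  also have "\<dots> = (\<Prod>j<p. \<Prod>i<p. rp j x ^ (i choose j))" by (rule prod.swap)
  also have "\<dots> = (\<Prod>j<p. rp j x ^ (\<Sum>i<p. i choose j))" by (simp add: power_sum)
  also have "\<dots> = (\<Prod>j<p. rp j x ^ (p choose Suc j))"
  proof -
    have "(\<Sum>i<p. i choose j) = p choose Suc j" for j
    proof -
      obtain m where pm: "p = Suc m" using p_pos by (cases p) auto
      show ?thesis unfolding pm by (simp only: lessThan_Suc_atMost sum_choose_upper)
    qed
    then show ?thesis by simp
  qed
  finally show ?thesis .
qed

lemma norm_H: "N x = rp (p-1) x * H x ^ p"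
proof -
  have hdiv: "rp j x ^ (p choose Suc j) = (rp j x ^ ((p choose Suc j) div p)) ^ p" if "j < p-1" for j
  proof -
    have "p dvd (p choose Suc j)" using that prime_p by (intro dvd_choose_prime) auto
    then have "p choose Suc j = (p choose Suc j) div p * p" by simp
    then show ?thesis by (metis power_mult)
  qed
  have hp: "(\<Prod>j<p-1. rp j x ^ (p choose Suc j)) = H x ^ p"
  proof -
    have "H x ^ p = (\<Prod>j<p-1. (rp j x ^ ((p choose Suc j) div p)) ^ p)"
      unfolding H_def by (simp add: prod_power_distrib)
    then show ?thesis using hdiv by simp
  qed
  obtain m where pm: "p = Suc m" using p_pos by (cases p) auto
  have "N x = (\<Prod>j<Suc m. rp j x ^ (Suc m choose Suc j))" using norm_expand[of x] unfolding pm .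
  also have "\<dots> = (\<Prod>j<m. rp j x ^ (Suc m choose Suc j)) * rp m x"
    by (simp only: prod.lessThan_Suc binomial_n_n power_one_right)
  finally show ?thesis using hp unfolding pm by (simp add: mult.commute)
qed

lemma H_nz: "x \<noteq> 0 \<Longrightarrow> H x \<noteq> 0"
  unfolding H_def by (simp add: rp_nz)

lemma H_rho: "H (r x) = r (H x)"
  unfolding H_def by (simp add: rho_prod rho_power rp_Suc rp_Suc'[symmetric])

lemma H_div_fix: assumes "\<sigma> d = d" "d \<noteq> 0" shows "H (x / d) = H x / d"
proof -
  have pS: "p - 1 = Suc (p - 2)" using p_ge3 by simp
  have c1: "(p choose Suc 0) div p = 1" using p_pos by simp
  have "H (x / d) = (x / d) * (\<Prod>j<p-2. rp (Suc j) (x / d) ^ ((p choose Suc (Suc j)) div p))"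
    unfolding H_def pS prod.lessThan_Suc_shift using c1 by simp
  also have "\<dots> = (x / d) * (\<Prod>j<p-2. rp (Suc j) x ^ ((p choose Suc (Suc j)) div p))"
    using rp_fix[OF assms] by (simp add: rp_divide)
  also have "H x = x * (\<Prod>j<p-2. rp (Suc j) x ^ ((p choose Suc (Suc j)) div p))"
    unfolding H_def pS prod.lessThan_Suc_shift using c1 by simp
  ultimately show ?thesis by simp
qed

lemma prod_rot: "f p = f 0 \<Longrightarrow> (\<Prod>i<p. f (Suc i)) = (\<Prod>i<p. (f i :: 'k))"
proof -
  assume a: "f p = f 0"
  obtain m where pm: "p = Suc m" using p_pos by (cases p) auto
  have e1: "(\<Prod>i<Suc m. f (Suc i)) = (\<Prod>i<m. f (Suc i)) * f (Suc m)" by (rule prod.lessThan_Suc)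
  have e2: "(\<Prod>i<Suc m. f i) = f 0 * (\<Prod>i<m. f (Suc i))" by (rule prod.lessThan_Suc_shift)
  have "(\<Prod>i<Suc m. f (Suc i)) = (\<Prod>i<Suc m. f i)"
    unfolding e1 e2 using a pm by (simp add: mult.commute)
  then show ?thesis unfolding pm .
qed

lemma sum_rot: "f p = f 0 \<Longrightarrow> (\<Sum>i<p. f (Suc i)) = (\<Sum>i<p. (f i :: 'k))"
proof -
  assume a: "f p = f 0"
  obtain m where pm: "p = Suc m" using p_pos by (cases p) auto
  have e1: "(\<Sum>i<Suc m. f (Suc i)) = (\<Sum>i<m. f (Suc i)) + f (Suc m)" by (rule sum.lessThan_Suc)
  have e2: "(\<Sum>i<Suc m. f i) = f 0 + (\<Sum>i<m. f (Suc i))" by (rule sum.lessThan_Suc_shift)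
  have "(\<Sum>i<Suc m. f (Suc i)) = (\<Sum>i<Suc m. f i)"
    unfolding e1 e2 using a pm by (simp add: add.commute)
  then show ?thesis unfolding pm .
qed

lemma norm_fix: "\<sigma> (N x) = N x"
  unfolding normK_def fhom_prod[OF hom]
  using prod_rot[of "\<lambda>i. (\<sigma> ^^ i) x"] sigma_p by simp

lemma norm_nz: "x \<noteq> 0 \<Longrightarrow> N x \<noteq> 0"
  unfolding normK_def by (simp add: fhom_nz[OF homi])

lemma norm_divide: "N (x / y) = N x / N y"
  unfolding normK_def by (simp add: fhom_divide[OF homi] prod_dividef)

lemma sigi_fix: "\<sigma> d = d \<Longrightarrow> (\<sigma> ^^ i) d = d"
  by (induction i) simp_all

lemma norm_fixed: "\<sigma> d = d \<Longrightarrow> N d = d ^ p"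
  unfolding normK_def by (simp add: sigi_fix)

lemma rp_p_pth: assumes "x \<noteq> 0" shows "pth (rp p x)"
proof -
  obtain m where pm: "p = Suc m" using p_pos by (cases p) auto
  have hx: "H x \<noteq> 0" using H_nz[OF assms] .
  have "rp (p-1) x = N x / H x ^ p" using norm_H[of x] hx by simp
  then have "rp m x = N x / H x ^ p" using pm by simp
  moreover have "rp p x = r (rp m x)" unfolding pm by (rule rp_Suc)
  ultimately have "rp p x = r (N x / H x ^ p)" by simp
  then have "rp p x = r (N x) / r (H x) ^ p" by (simp only: rho_divide rho_power)
  also have "r (N x) = 1" using rho_fix[OF norm_fix norm_nz[OF assms]] .
  finally have "rp p x = (inverse (r (H x))) ^ p" by (simp add: power_inverse divide_inverse)
  then show ?thesis using pth_pp[of "inverse (r (H x))"] rho_nz[OF hx] by simp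
qed

abbreviation L where "L x \<equiv> len p \<sigma> x"

lemma len_ex: "x \<noteq> 0 \<Longrightarrow> pth (rp (L x) x)"
  unfolding len_def using rp_p_pth by (rule LeastI)
lemma len_le: "x \<noteq> 0 \<Longrightarrow> L x \<le> p"
  unfolding len_def using rp_p_pth by (rule Least_le)
lemma len_min: "i < L x \<Longrightarrow> \<not> pth (rp i x)"
  unfolding len_def by (rule not_less_Least)
lemma len_eqI: "pth (rp l x) \<Longrightarrow> (\<And>i. i < l \<Longrightarrow> \<not> pth (rp i x)) \<Longrightarrow> L x = l"
  unfolding len_def by (rule Least_equality) (auto simp: not_less[symmetric])

lemma sig_xi_pow: "\<sigma> (\<xi> ^ k) = \<xi> ^ k" by (simp add: fhom_power[OF hom] sigma_xi)

lemma idx_unique: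
  assumes "d1 ^ p = d2 ^ p" "d2 \<noteq> 0" "\<sigma> d1 = \<xi> ^ e1 * d1" "\<sigma> d2 = \<xi> ^ e2 * d2" "e1 < p" "e2 < p"
  shows "e1 = e2"
proof -
  have "(d1 / d2) ^ p = 1" using assms(1,2) by (simp add: power_divide)
  then obtain k where k: "d1 / d2 = \<xi> ^ k" using root_unity by blast
  then have d1: "d1 = \<xi> ^ k * d2" using assms(2) by (simp add: field_simps)
  have "\<sigma> d1 = \<xi> ^ k * (\<xi> ^ e2 * d2)" unfolding d1 fhom_mult[OF hom] sig_xi_pow assms(4) ..
  also have "\<xi> ^ k * (\<xi> ^ e2 * d2) = \<xi> ^ e2 * d1" unfolding d1 by (simp only: mult.left_commute)
  finally have "\<xi> ^ e1 * d1 = \<xi> ^ e2 * d1" using assms(3) by simp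
  moreover have "d1 \<noteq> 0" using d1 assms(2) xi_nz by simp
  ultimately have "\<xi> ^ e1 = \<xi> ^ e2" by simp
  then show ?thesis using xi_inj assms(5,6) by blast
qed

lemma idx_exists: assumes "x \<noteq> 0" "pth (rp (p-1) x)"
  shows "\<exists>e. e < p \<and> (\<exists>\<delta>. \<delta> ^ p = N x \<and> \<sigma> \<delta> = \<xi> ^ e * \<delta>)"
proof -
  obtain b where b: "b \<noteq> 0" "rp (p-1) x = b ^ p" using assms(2) unfolding pth_power_def by blast
  define d where "d = b * H x"
  have dp: "d ^ p = N x" unfolding d_def norm_H b(2) by (simp add: power_mult_distrib)
  have dnz: "d \<noteq> 0" using b(1) H_nz[OF assms(1)] by (simp add: d_def)
  have "\<sigma> d ^ p = d ^ p" using norm_fix[of x] unfolding dp[symmetric] fhom_power[OF hom] .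
  then have "(\<sigma> d / d) ^ p = 1" using dnz by (simp add: power_divide)
  then obtain k where k: "k < p" "\<sigma> d / d = \<xi> ^ k" using root_unity by blast
  then have "\<sigma> d = \<xi> ^ k * d" using dnz by (simp add: field_simps)
  then show ?thesis using k(1) dp by blast
qed

lemma idx0_fixed: assumes "x \<noteq> 0" "pth (rp (p-1) x)" "idx p \<sigma> \<xi> x = 0"
  shows "\<exists>\<delta>. \<delta> ^ p = N x \<and> \<sigma> \<delta> = \<delta>"
proof -
  have "idx p \<sigma> \<xi> x < p \<and> (\<exists>\<delta>. \<delta> ^ p = N x \<and> \<sigma> \<delta> = \<xi> ^ (idx p \<sigma> \<xi> x) * \<delta>)"
    unfolding idx_def using idx_exists[OF assms(1,2)] by (rule someI_ex)
  then show ?thesis using assms(3) by simp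
qed

lemma idx_eqI: assumes "x \<noteq> 0" "e < p" "\<delta> ^ p = N x" "\<sigma> \<delta> = \<xi> ^ e * \<delta>"
  shows "idx p \<sigma> \<xi> x = e"
proof -
  have ex: "\<exists>e. e < p \<and> (\<exists>\<delta>. \<delta> ^ p = N x \<and> \<sigma> \<delta> = \<xi> ^ e * \<delta>)" using assms by blast
  have "idx p \<sigma> \<xi> x < p \<and> (\<exists>\<delta>. \<delta> ^ p = N x \<and> \<sigma> \<delta> = \<xi> ^ (idx p \<sigma> \<xi> x) * \<delta>)"
    unfolding idx_def using ex by (rule someI_ex)
  then obtain d where d: "idx p \<sigma> \<xi> x < p" "d ^ p = N x" "\<sigma> d = \<xi> ^ (idx p \<sigma> \<xi> x) * d" by blast
  have "\<delta> \<noteq> 0" using assms(1,3) norm_nz[OF assms(1)] p_pos by (metis zero_power)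
  then show ?thesis using idx_unique[of d \<delta>] d assms by simp
qed

lemma hilbert90: assumes "u \<noteq> 0" "N u = 1" shows "\<exists>Y. Y \<noteq> 0 \<and> u * \<sigma> Y = Y"
proof -
  define c where "c k = (\<Prod>i<k. (\<sigma> ^^ i) u)" for k
  define Yf where "Yf \<theta> = (\<Sum>k<p. c k * (\<sigma> ^^ k) \<theta>)" for \<theta>
  have c0: "c 0 = 1" by (simp add: c_def)
  have "\<exists>\<theta>. Yf \<theta> \<noteq> 0"
  proof (rule ccontr)
    assume "\<not> (\<exists>\<theta>. Yf \<theta> \<noteq> 0)"
    then have all0: "Yf \<theta> = 0" for \<theta> by blast
    define Q where "Q = (\<Sum>k<p. monom (c k) k)"
    have roots: "poly Q (\<xi> ^ j) = 0" for j
    proof -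
      have "Yf (\<alpha> ^ j) = (\<Sum>k<p. c k * (\<xi> ^ j) ^ k) * \<alpha> ^ j"
        unfolding Yf_def sum_distrib_right
        by (rule sum.cong) (simp_all add: fhom_power[OF homi] sigmai_alpha power_mult_distrib
            power_mult[symmetric] mult.commute)
      then have "(\<Sum>k<p. c k * (\<xi> ^ j) ^ k) = 0" using all0 alpha_nz by simp
      then show ?thesis unfolding Q_def by (simp add: poly_sum poly_monom)
    qed
    have cQ: "coeff Q 0 = 1" unfolding Q_def coeff_sum using p_pos c0 by simp
    then have Q0: "Q \<noteq> 0" by auto
    have dQ: "degree Q \<le> p - 1" unfolding Q_def
      by (rule degree_sum_le) (auto simp: degree_monom_le intro: order.trans[OF degree_monom_le])
    have inj: "inj_on (\<lambda>k. \<xi> ^ k) {..<p}" using xi_inj by (auto simp: inj_on_def)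
    have "(\<lambda>k. \<xi> ^ k) ` {..<p} \<subseteq> {x. poly Q x = 0}" using roots by auto
    then have "card ((\<lambda>k. \<xi> ^ k) ` {..<p}) \<le> card {x. poly Q x = 0}"
      using poly_roots_finite[OF Q0] by (rule card_mono[rotated])
    moreover have "card ((\<lambda>k. \<xi> ^ k) ` {..<p}) = p" using card_image[OF inj] by simp
    moreover have "card {x. poly Q x = 0} \<le> degree Q" using card_poly_roots_bound[OF Q0] .
    ultimately show False using dQ p_pos by linarith
  qed
  then obtain \<theta> where th: "Yf \<theta> \<noteq> 0" by blast
  define f where "f k = c k * (\<sigma> ^^ k) \<theta>" for k
  have uc: "u * \<sigma> (c k) = c (Suc k)" for k
  proof -
    have "c (Suc k) = u * (\<Prod>i<k. (\<sigma> ^^ Suc i) u)" unfolding c_def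
      by (subst prod.lessThan_Suc_shift) simp
    moreover have "\<sigma> (c k) = (\<Prod>i<k. (\<sigma> ^^ Suc i) u)" unfolding c_def fhom_prod[OF hom] by simp
    ultimately show ?thesis by simp
  qed
  have "u * \<sigma> (Yf \<theta>) = (\<Sum>k<p. u * \<sigma> (c k) * (\<sigma> ^^ Suc k) \<theta>)"
    unfolding Yf_def fhom_sum[OF hom] sum_distrib_left by (simp add: fhom_mult[OF hom] mult.assoc)
  also have "\<dots> = (\<Sum>k<p. f (Suc k))" unfolding f_def uc ..
  also have "\<dots> = (\<Sum>k<p. f k)"
  proof (rule sum_rot)
    have "c p = 1" using assms(2) unfolding c_def normK_def .
    then show "f p = f 0" unfolding f_def using sigma_p c0 by simp
  qed
  also have "\<dots> = Yf \<theta>" unfolding f_def Yf_def ..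
  finally show ?thesis using th by blast
qed

lemma cls_eq: assumes "a = b * \<beta> ^ p" "\<beta> \<noteq> 0" shows "cls p a = cls p b"
proof
  show "cls p a \<subseteq> cls p b"
  proof
    fix y assume "y \<in> cls p a"
    then obtain t where t: "t \<noteq> 0" "y = a * t ^ p" unfolding cls_def by blast
    then have "y = b * (\<beta> * t) ^ p" using assms by (simp add: power_mult_distrib ac_simps)
    then show "y \<in> cls p b" unfolding cls_def using t assms by auto
  qed
next
  show "cls p b \<subseteq> cls p a"
  proof
    fix y assume "y \<in> cls p b"
    then obtain t where t: "t \<noteq> 0" "y = b * t ^ p" unfolding cls_def by blast
    then have "y = a * (t / \<beta>) ^ p" using assms by (simp add: power_divide)
    then show "y \<in> cls p a" unfolding cls_def using t assms by auto
  qed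
qed

lemma cls_self: "a \<in> cls p a" unfolding cls_def by (rule CollectI, rule exI[of _ 1]) simp

definition E :: "'k \<Rightarrow> (nat \<Rightarrow> nat) \<Rightarrow> 'k" where
  "E x c = (\<Prod>i<p. ((\<sigma> ^^ i) x) ^ c i)"

lemma E_mult: "E x c * E x d = E x (\<lambda>i. c i + d i)"
  unfolding E_def by (simp add: power_add prod.distrib)
lemma E_power: "E x c ^ n = E x (\<lambda>i. c i * n)"
  unfolding E_def by (simp add: power_mult prod_power_distrib)
lemma E_sigma: "\<sigma> (E x c) = E x (\<lambda>i. if i = 0 then c (p-1) else c (i-1))"
proof -
  define f where "f i = ((\<sigma> ^^ i) x) ^ (if i = 0 then c (p-1) else c (i-1))" for i
  have "\<sigma> (E x c) = (\<Prod>i<p. f (Suc i))"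
    unfolding E_def f_def fhom_prod[OF hom] fhom_power[OF hom] by simp
  also have "\<dots> = (\<Prod>i<p. f i)"
    by (rule prod_rot) (simp add: f_def sigma_p p_pos)
  finally show ?thesis unfolding E_def f_def .
qed
lemma E_x: "x = E x (\<lambda>i. if i = 0 then 1 else 0)"
proof -
  have "E x (\<lambda>i. if i = 0 then 1 else 0) = (\<Prod>i\<in>{0}. ((\<sigma> ^^ i) x) ^ (if i = 0 then 1 else 0))"
    unfolding E_def by (rule prod.mono_neutral_right) (use p_pos in auto)
  then show ?thesis by simp
qed

definition rr :: "'k \<Rightarrow> 'k" where "rr y = \<sigma> y * y ^ (p - 1)"

lemma rr_range: "\<exists>c. (rr ^^ n) x = E x c"
proof (induction n)
  case 0 then show ?case using E_x by auto
next
  case (Suc n)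
  then obtain c where c: "(rr ^^ n) x = E x c" by blast
  have "(rr ^^ Suc n) x = rr (E x c)" using c by simp
  also have "\<dots> = \<sigma> (E x c) * E x c ^ (p-1)" by (simp only: rr_def)
  also have "\<dots> = E x (\<lambda>i. if i = 0 then c (p-1) else c (i-1)) * E x (\<lambda>i. c i * (p - 1))"
    by (simp only: E_sigma E_power)
  also have "\<dots> = E x (\<lambda>i. (if i = 0 then c (p-1) else c (i-1)) + c i * (p - 1))" by (rule E_mult)
  finally show ?case by blast
qed

lemma rr_equiv: "x \<noteq> 0 \<Longrightarrow> \<exists>b. b \<noteq> 0 \<and> (rr ^^ n) x = rp n x * b ^ p"
proof (induction n)
  case 0 then show ?case by (intro exI[of _ 1]) simp
next
  case (Suc n)
  then obtain b where b: "b \<noteq> 0" "(rr ^^ n) x = rp n x * b ^ p" by blast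
  define y where "y = rp n x * b ^ p"
  have ynz: "y \<noteq> 0" using b(1) rp_nz[OF Suc.prems] by (simp add: y_def)
  obtain m where pm: "p = Suc m" using p_pos by (cases p) auto
  have "rr y = r y * y ^ p"
  proof -
    have "y ^ p = y * y ^ m" unfolding pm by simp
    moreover have "rr y = \<sigma> y * y ^ m" unfolding rr_def using pm by simp
    moreover have "r y = \<sigma> y / y" unfolding rho_def ..
    ultimately show ?thesis using ynz by simp
  qed
  also have "r y = rp (Suc n) x * r b ^ p" unfolding y_def rho_mult rho_power rp_Suc ..
  also have "rp (Suc n) x * r b ^ p * y ^ p = rp (Suc n) x * (r b * y) ^ p"
    by (simp only: power_mult_distrib mult.assoc)
  finally have e: "rr y = rp (Suc n) x * (r b * y) ^ p" .
  have "(rr ^^ Suc n) x = rr y" using b(2) unfolding y_def by simp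
  then have "(rr ^^ Suc n) x = rp (Suc n) x * (r b * y) ^ p" using e by simp
  moreover have "r b * y \<noteq> 0" using rho_nz[OF b(1)] ynz by simp
  ultimately show ?case by blast
qed

lemma E_expand: "E x c = (\<Prod>j<p. rp j x ^ (\<Sum>i<p. (i choose j) * c i))"
proof -
  have "E x c = (\<Prod>i<p. \<Prod>j<p. rp j x ^ ((i choose j) * c i))"
    unfolding E_def by (rule prod.cong) (simp_all add: sig_expand_ext power_mult prod_power_distrib)
  also have "\<dots> = (\<Prod>j<p. \<Prod>i<p. rp j x ^ ((i choose j) * c i))" by (rule prod.swap)
  also have "\<dots> = (\<Prod>j<p. rp j x ^ (\<Sum>i<p. (i choose j) * c i))" by (simp add: power_sum)
  finally show ?thesis .
qed

lemma annih:
  assumes x: "x \<noteq> 0" and l1: "L x \<ge> 1" and P: "pth (r (\<Prod>j<p. rp j x ^ a j))"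
  shows "j < L x - 1 \<Longrightarrow> p dvd a j"
proof (induction j rule: less_induct)
  case (less j)
  define l where "l = L x"
  have lp: "l \<le> p" using len_le[OF x] by (simp add: l_def)
  have big: "pth (rp i x)" if "l \<le> i" for i using rp_mono[OF len_ex[OF x]] that by (simp add: l_def)
  define m where "m = l - 1 - j"
  have m1: "1 \<le> m" using less.prems by (simp add: m_def l_def)
  have "pth (rp 1 (\<Prod>j<p. rp j x ^ a j))" using P by (simp add: rp_Suc)
  then have "pth (rp m (\<Prod>j<p. rp j x ^ a j))" using rp_mono m1 by blast
  also have "rp m (\<Prod>j<p. rp j x ^ a j) = (\<Prod>j'<p. rp (m + j') x ^ a j')"
    by (simp add: rp_prod rp_power rp_add)
  finally have pt: "pth (\<Prod>j'<p. rp (m + j') x ^ a j')" .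
  have jp: "j \<in> {..<p}" using less.prems lp by (simp add: l_def)
  have split: "(\<Prod>j'<p. rp (m + j') x ^ a j') = rp (m + j) x ^ a j * (\<Prod>j'\<in>{..<p} - {j}. rp (m + j') x ^ a j')"
    using prod.remove[OF _ jp] by simp
  have rest: "pth (\<Prod>j'\<in>{..<p} - {j}. rp (m + j') x ^ a j')"
  proof (rule pth_prod)
    fix j' assume j': "j' \<in> {..<p} - {j}"
    show "pth (rp (m + j') x ^ a j')"
    proof (cases "j' < j")
      case True
      then have "p dvd a j'" using less.IH less.prems by simp
      then show ?thesis using pth_pmult rp_nz[OF x] by blast
    next
      case False
      then have "j < j'" using j' by auto
      then have "l \<le> m + j'" using less.prems by (simp add: m_def l_def)
      then show ?thesis using big pth_power by blast
    qed
  qed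
  have "pth (rp (m + j) x ^ a j)" using pt rest split pth_cancel by metis
  moreover have "m + j = l - 1" using less.prems by (simp add: m_def l_def)
  ultimately have pj: "pth (rp (l - 1) x ^ a j)" by simp
  show ?case
  proof (rule ccontr)
    assume "\<not> p dvd a j"
    then have "pth (rp (l - 1) x)" using pth_coprime[OF rp_nz[OF x] pj] by blast
    moreover have "l - 1 < L x" using l1 by (simp add: l_def)
    ultimately show False using len_min by blast
  qed
qed

lemma annih2:
  assumes x: "x \<noteq> 0" and l1: "L x \<ge> 1" and P: "pth (r (\<Prod>j<p. rp j x ^ a j))"
  shows "\<exists>\<beta>. \<beta> \<noteq> 0 \<and> (\<Prod>j<p. rp j x ^ a j) = rp (L x - 1) x ^ a (L x - 1) * \<beta> ^ p"
proof -
  define l where "l = L x"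
  have lp: "l \<le> p" using len_le[OF x] by (simp add: l_def)
  have big: "pth (rp i x)" if "l \<le> i" for i using rp_mono[OF len_ex[OF x]] that by (simp add: l_def)
  have jp: "l - 1 \<in> {..<p}" using l1 lp by (simp add: l_def)
  have split: "(\<Prod>j<p. rp j x ^ a j) = rp (l - 1) x ^ a (l - 1) * (\<Prod>j\<in>{..<p} - {l - 1}. rp j x ^ a j)"
    using prod.remove[OF _ jp] by simp
  have rest: "pth (\<Prod>j\<in>{..<p} - {l - 1}. rp j x ^ a j)"
  proof (rule pth_prod)
    fix j assume j: "j \<in> {..<p} - {l - 1}"
    show "pth (rp j x ^ a j)"
    proof (cases "j < l - 1")
      case True
      then have "p dvd a j" using annih[OF x l1 P] by (simp add: l_def)
      then show ?thesis using pth_pmult rp_nz[OF x] by blast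
    next
      case False
      then have "l \<le> j" using j l1 by (auto simp: l_def)
      then show ?thesis using big pth_power by blast
    qed
  qed
  then obtain \<beta> where "\<beta> \<noteq> 0" "(\<Prod>j\<in>{..<p} - {l - 1}. rp j x ^ a j) = \<beta> ^ p"
    unfolding pth_power_def by blast
  then show ?thesis using split by (auto simp: l_def)
qed

lemma Mfix_char: assumes x: "x \<noteq> 0" and l1: "L x \<ge> 1"
  shows "Mfix p \<sigma> x = {cls p (rp (L x - 1) x ^ k) | k. True}"
proof -
  define w where "w = rp (L x - 1) x"
  have wnz: "w \<noteq> 0" using rp_nz[OF x] by (simp add: w_def)
  have rw: "pth (r w)"
  proof -
    have "r w = rp (L x) x" using l1 rp_Suc[of "L x - 1" x] by (simp add: w_def)
    then show ?thesis using len_ex[OF x] by simp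
  qed
  have inM: "cls p (w ^ k) \<in> Mgen p \<sigma> x" for k
  proof -
    obtain c where c: "(rr ^^ (L x - 1)) x = E x c" using rr_range by blast
    obtain b where b: "b \<noteq> 0" "(rr ^^ (L x - 1)) x = w * b ^ p" using rr_equiv[OF x] unfolding w_def by blast
    have e1: "E x c = w * b ^ p" using b(2) c by simp
    have e2: "(b ^ p) ^ k = (b ^ k) ^ p" by (metis power_mult mult.commute)
    have "E x c ^ k = w ^ k * (b ^ k) ^ p" unfolding e1 power_mult_distrib e2 ..
    then have "E x (\<lambda>i. c i * k) = w ^ k * (b ^ k) ^ p" by (simp add: E_power)
    then have "cls p (E x (\<lambda>i. c i * k)) = cls p (w ^ k)" using b(1) by (intro cls_eq[of _ _ "b ^ k"]) simp_all
    then show ?thesis unfolding Mgen_def E_def by auto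
  qed
  have fixed: "\<forall>y\<in>cls p (w ^ k). pth (r y)" for k
  proof
    fix y assume "y \<in> cls p (w ^ k)"
    then obtain t where t: "t \<noteq> 0" "y = w ^ k * t ^ p" unfolding cls_def by blast
    have "r y = r w ^ k * r t ^ p" using t by (simp add: rho_mult rho_power)
    then show "pth (r y)" using rw pth_power pth_mult pth_pp rho_nz[OF t(1)] by metis
  qed
  show ?thesis
  proof (rule set_eqI, rule iffI)
    fix X assume "X \<in> Mfix p \<sigma> x"
    then obtain c where Xc: "X = cls p (E x c)" and fx: "\<forall>y\<in>X. pth (r y)"
      unfolding Mfix_def Mgen_def E_def by blast
    have "pth (r (E x c))" using fx cls_self Xc by blast
    then have P: "pth (r (\<Prod>j<p. rp j x ^ (\<Sum>i<p. (i choose j) * c i)))" unfolding E_expand .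
    obtain \<beta> where "\<beta> \<noteq> 0" "E x c = w ^ (\<Sum>i<p. (i choose (L x - 1)) * c i) * \<beta> ^ p"
      using annih2[OF x l1 P] unfolding E_expand[symmetric] w_def by blast
    then have "X = cls p (w ^ (\<Sum>i<p. (i choose (L x - 1)) * c i))" using Xc cls_eq by blast
    then show "X \<in> {cls p (rp (L x - 1) x ^ k) | k. True}" unfolding w_def by blast
  next
    fix X assume "X \<in> {cls p (rp (L x - 1) x ^ k) | k. True}"
    then obtain k where "X = cls p (w ^ k)" unfolding w_def by blast
    then show "X \<in> Mfix p \<sigma> x" unfolding Mfix_def using inM fixed by simp
  qed
qed

lemma main:
  assumes g: "\<gamma> \<noteq> 0"
    and l2: "2 \<le> L \<gamma>" and lp: "L \<gamma> < p"
    and i0: "idx p \<sigma> \<xi> \<gamma> = 0"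
  shows "\<exists>\<gamma>'. \<gamma>' \<noteq> 0 \<and>
           len p \<sigma> \<gamma>' = len p \<sigma> \<gamma> + 1 \<and>
           cls p (rho_pow \<sigma> 2 \<gamma>') = cls p (rho_pow \<sigma> 1 \<gamma>) \<and>
           Mfix p \<sigma> \<gamma> = Mfix p \<sigma> \<gamma>' \<and>
           (len p \<sigma> \<gamma> < p - 1 \<longrightarrow> inJ p \<sigma> (p - 1) \<gamma>' \<and> idx p \<sigma> \<xi> \<gamma>' = 0)"
proof -
  define l where "l = L \<gamma>"
  have lex: "pth (rp l \<gamma>)" using len_ex[OF g] by (simp add: l_def)
  have pm1: "pth (rp (p-1) \<gamma>)" using rp_mono[OF lex] lp by (simp add: l_def)
  obtain \<delta>1 where d1: "\<delta>1 ^ p = N \<gamma>" "\<sigma> \<delta>1 = \<delta>1" using idx0_fixed[OF g pm1 i0] by blast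
  have Nnz: "N \<gamma> \<noteq> 0" using norm_nz[OF g] .
  have d1nz: "\<delta>1 \<noteq> 0" using d1(1) Nnz p_pos by (metis zero_power)
  have p2: "p - 1 = Suc (p - 2)" using p_ge3 by simp
  obtain \<delta> where d: "\<delta> ^ p = N \<gamma>" "\<sigma> \<delta> = \<delta>"
     and dc: "l < p - 1 \<Longrightarrow> \<exists>c. c \<noteq> 0 \<and> c ^ p = rp (p-2) \<gamma> \<and> \<delta> = r c * H \<gamma>"
  proof (cases "l < p - 1")
    case True
    have "pth (rp (p-2) \<gamma>)" using rp_mono[OF lex] True by simp
    then obtain c where c: "c \<noteq> 0" "c ^ p = rp (p-2) \<gamma>" unfolding pth_power_def by metis
    define dd where "dd = r c * H \<gamma>"
    have "dd ^ p = r (c ^ p) * H \<gamma> ^ p" by (simp add: dd_def power_mult_distrib rho_power)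
    also have "r (c ^ p) = rp (p-1) \<gamma>" unfolding c(2) p2 rp_Suc ..
    finally have ddp: "dd ^ p = N \<gamma>" using norm_H[of \<gamma>] by simp
    have "(dd / \<delta>1) ^ p = 1" using ddp d1(1) Nnz by (simp add: power_divide)
    then obtain k where "dd / \<delta>1 = \<xi> ^ k" using root_unity by blast
    then have "dd = \<xi> ^ k * \<delta>1" using d1nz by (simp add: field_simps)
    then have "\<sigma> dd = dd" by (simp add: fhom_mult[OF hom] sig_xi_pow d1(2))
    then show ?thesis using that ddp c by (auto simp: dd_def)
  next
    case False
    then show ?thesis using that d1 by blast
  qed
  have dnz: "\<delta> \<noteq> 0" using d(1) Nnz p_pos by (metis zero_power)
  define u where "u = \<delta> / \<gamma>"
  have unz: "u \<noteq> 0" using dnz g by (simp add: u_def)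
  have Nu: "N u = 1" unfolding u_def norm_divide norm_fixed[OF d(2)] d(1) using Nnz by simp
  obtain Y where Y: "Y \<noteq> 0" "u * \<sigma> Y = Y" using hilbert90[OF unz Nu] by blast
  have rY: "r Y = \<gamma> / \<delta>"
  proof -
    have "\<sigma> Y = Y / u" using Y(2) unz by (simp add: field_simps)
    then show ?thesis unfolding rho_def u_def using Y(1) dnz g by (simp add: field_simps)
  qed
  have rpY: "rp (Suc (Suc k)) Y = rp (Suc k) \<gamma>" for k
  proof -
    have "rp (Suc (Suc k)) Y = rp (Suc k) (\<gamma> / \<delta>)" unfolding rp_Suc'[of "Suc k" Y] rY ..
    also have "\<dots> = rp (Suc k) \<gamma>" using rp_fix[OF d(2) dnz, of "Suc k"] by (simp add: rp_divide)
    finally show ?thesis .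
  qed
  have l1: "l - 1 = Suc (l - 2)" using l2 by (simp add: l_def)
  have lS: "l = Suc (Suc (l - 2))" using l2 by (simp add: l_def)
  have LY: "L Y = l + 1"
  proof (rule len_eqI)
    show "pth (rp (l + 1) Y)" using lex rpY[of "l - 1"] lS l1 by simp
  next
    fix i assume i: "i < l + 1"
    show "\<not> pth (rp i Y)"
    proof
      assume "pth (rp i Y)"
      then have "pth (rp l Y)" using rp_mono i by simp
      moreover have "rp l Y = rp (l - 1) \<gamma>" using rpY[of "l - 2"] lS l1 by metis
      ultimately have "pth (rp (l - 1) \<gamma>)" by simp
      moreover have "l - 1 < L \<gamma>" using l2 by (simp add: l_def)
      ultimately show False using len_min by blast
    qed
  qed
  have c3: "rho_pow \<sigma> 2 Y = rho_pow \<sigma> 1 \<gamma>" using rpY[of 0] by (simp add: numeral_2_eq_2)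
  have c4: "Mfix p \<sigma> \<gamma> = Mfix p \<sigma> Y"
  proof -
    have "Mfix p \<sigma> \<gamma> = {cls p (rp (l - 1) \<gamma> ^ k) | k. True}"
      using Mfix_char[OF g] l2 by (simp add: l_def)
    moreover have "Mfix p \<sigma> Y = {cls p (rp l Y ^ k) | k. True}"
      using Mfix_char[OF Y(1)] LY by simp
    moreover have "rp l Y = rp (l - 1) \<gamma>" using rpY[of "l - 2"] lS l1 by metis
    ultimately show ?thesis by simp
  qed
  have c5: "inJ p \<sigma> (p - 1) Y \<and> idx p \<sigma> \<xi> Y = 0" if lt: "l < p - 1"
  proof
    show "inJ p \<sigma> (p - 1) Y" unfolding inJ_def
      using rp_mono[OF len_ex[OF Y(1)]] LY lt by simp
    obtain c where c: "c \<noteq> 0" "c ^ p = rp (p-2) \<gamma>" "\<delta> = r c * H \<gamma>" using dc[OF lt] by blast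
    define dY where "dY = c * H Y"
    have p2': "p - 2 = Suc (p - 3)" using p_ge3 by simp
    have "rp (p - 1) Y = rp (p - 2) \<gamma>" unfolding p2 p2' rpY ..
    then have NY: "dY ^ p = N Y" unfolding dY_def norm_H[of Y] using c(2) by (simp add: power_mult_distrib)
    have "r dY = r c * H (r Y)" unfolding dY_def rho_mult H_rho ..
    also have "\<dots> = r c * H \<gamma> / \<delta>" unfolding rY H_div_fix[OF d(2) dnz] by simp
    also have "\<dots> = 1" using c(3) dnz by simp
    finally have "\<sigma> dY = \<xi> ^ 0 * dY" using sig_eq[of dY] by simp
    then show "idx p \<sigma> \<xi> Y = 0" using idx_eqI[OF Y(1) p_pos NY] by simp
  qed
  show ?thesis using Y(1) LY c3 c4 c5 by (auto simp: l_def)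
qed

end

theorem lemma6:
  fixes F :: "'k::field set" and \<xi> \<alpha> \<gamma> :: 'k and \<sigma> :: "'k \<Rightarrow> 'k" and p :: nat
  assumes "kummer_setup p F \<xi> \<alpha> \<sigma>"
    and "\<gamma> \<noteq> 0"
    and "2 \<le> len p \<sigma> \<gamma>" and "len p \<sigma> \<gamma> < p"
    and "idx p \<sigma> \<xi> \<gamma> = 0"
  shows "\<exists>\<gamma>'. \<gamma>' \<noteq> 0 \<and>
           len p \<sigma> \<gamma>' = len p \<sigma> \<gamma> + 1 \<and>
           cls p (rho_pow \<sigma> 2 \<gamma>') = cls p (rho_pow \<sigma> 1 \<gamma>) \<and>
           Mfix p \<sigma> \<gamma> = Mfix p \<sigma> \<gamma>' \<and>
           (len p \<sigma> \<gamma> < p - 1 \<longrightarrow> inJ p \<sigma> (p - 1) \<gamma>' \<and> idx p \<sigma> \<xi> \<gamma>' = 0)"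
proof -
  interpret ks p F \<xi> \<alpha> \<sigma> using assms(1) by unfold_locales
  show ?thesis using main[OF assms(2-5)] .
qed

end
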